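(* Let $M\geq 1$ be an integer and let $(\tau,R)$ be an $M$-layer medium, with $\tau=(\tau_0,\ldots,\tau_M)$ and $R=(R_0,\ldots,R_M)$. Then \[ G^{(\tau,R)}(t)=\sum_{k\in\mathfrak{L}_M}a(R,k)\,\delta(t-\langle k,\tau\rangle), \] where for each $k\in\mathfrak{L}_M$, setting $u=\min\{\mathbb{1},\tilde{k}\}$, \[ a(R,k)=\sum_{b\in V(k)}\binom{k}{b}\binom{\tilde{k}-u}{b-u}(-R)^{\tilde{k}-b}R^{k-b}T^{2b}, \] and $V(k)$ denotes the set of $b\in\mathbb{Z}^{M+1}$ such that $u\leq b\leq\min\{k,\tilde{k}\}$.
   Context: Fix depths $z_{-1}<z_0<z_1<\cdots<z_M$. An $M$-layer medium is a pair $(\tau,R)$ with $\tau=(\tau_0,\ldots,\tau_M)$ positive reals (two-way travel times; $\tau_j/2$ is the time to traverse between $z_{j-1}$ and $z_j$) and $R=(R_0,\ldots,R_M)$ reals with $-1<R_n<1$ (reflection coefficients at $z_n$). Set $T_n=\sqrt{1-R_n^2}$ and $T=(T_0,\ldots,T_M)$. A (reflection) scattering sequence is a finite sequence $\mathsf{p}=(\mathsf{p}_0,\ldots,\mathsf{p}_L)$ with $L\geq 2$, $\mathsf{p}_0=\mathsf{p}_L=z_{-1}$, $\mathsf{p}_i\in\{z_0,\ldots,z_M\}$ for $1\le i\le L-1$, and for every $0\le i\le L-1$ there is $-1\le j\le M-1$ with $\{\mathsf{p}_i,\mathsf{p}_{i+1}\}=\{z_j,z_{j+1}\}$. Let $\mathsf{S}_M$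 be the set of these. The weight of $\mathsf{p}$ is $w(\mathsf{p})=\prod_{i=1}^{L-1}w_i$, where if $\mathsf{p}_i=z_j$: $w_i=R_j$ if $\mathsf{p}_{i-1}=\mathsf{p}_{i+1}=z_{j-1}$; $w_i=-R_j$ if $\mathsf{p}_{i-1}=\mathsf{p}_{i+1}=z_{j+1}$; $w_i=T_j$ otherwise. The arrival time of $\mathsf{p}$ is $\sigma(\mathsf{p})=\sum_{i=0}^{L-1}\tau_{j_i}/2$, where step $i$ goes between $z_{j_i-1}$ and $z_{j_i}$ ($0\le j_i\le M$). The reflection Green's function (velocity impulse response recorded at $z_{-1}$ for a downward unit plane-wave impulse started at $z_{-1}$) is $G^{(\tau,R)}(t)=\sum_{\mathsf{p}\in\mathsf{S}_M}w(\mathsf{p})\,\delta(t-\sigma(\mathsf{p}))$, terms with equal arrival times being combined. $\mathfrak{L}_M=\{(k_0,\ldots,k_M)\in\mathbb{Z}_{\ge 0}^{M+1}: k_0=1\text{ and for all }n\le M-1,\ k_n=0\Rightarrow k_{n+1}=0\}$. Vector conventions: for $k=(k_0,\ldots,k_M)$, $\tilde{k}=(k_1,\ldots,k_M,0)$; $\mathbb{1}=(1,\ldots,1)\in\mathbb{Z}^{M+1}$; $\min$ and $\le$ are entrywise; $\langle k,\tau\rangle=\sum_n k_n\tau_n$; $s^d=\prod_{n=0}^M s_n^{d_n}$ (with $0^0=1$); $\binom{x}{y}=\prod_{n=0}^M\binom{x_n}{y_n}$. *)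

theory Defs
  imports Complex_Main
begin

text \<open>Depth z_j is represented by its index j :: int, with -1 \<le> j \<le> M.
  Media: tau, R :: nat \<Rightarrow> real, only the entries 0..M matter.
  Vectors in Z^(M+1) with nonnegative entries are represented as nat \<Rightarrow> nat
  vanishing beyond M.\<close>

definition transm :: "(nat \<Rightarrow> real) \<Rightarrow> nat \<Rightarrow> real" where
  "transm R n = sqrt (1 - (R n)\<^sup>2)"

definition scat_seqs :: "nat \<Rightarrow> int list set" where
  "scat_seqs M = {p. length p \<ge> 3 \<and> p ! 0 = -1 \<and> p ! (length p - 1) = -1
     \<and> (\<forall>i. 0 < i \<and> i < length p - 1 \<longrightarrow> 0 \<le> p ! i \<and> p ! i \<le> int M)
     \<and> (\<forall>i. i < length p - 1 \<longrightarrow> \<bar>p ! i - p ! Suc i\<bar> = 1)}"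

definition local_weight :: "(nat \<Rightarrow> real) \<Rightarrow> int list \<Rightarrow> nat \<Rightarrow> real" where
  "local_weight R p i =
     (let j = p ! i in
      if p ! (i - 1) = j - 1 \<and> p ! Suc i = j - 1 then R (nat j)
      else if p ! (i - 1) = j + 1 \<and> p ! Suc i = j + 1 then - R (nat j)
      else transm R (nat j))"

definition seq_weight :: "(nat \<Rightarrow> real) \<Rightarrow> int list \<Rightarrow> real" where
  "seq_weight R p = (\<Prod>i\<in>{1..<length p - 1}. local_weight R p i)"

text \<open>Step i goes between z_(j-1) and z_j where j = max p_i p_(i+1).\<close>
definition arrival :: "(nat \<Rightarrow> real) \<Rightarrow> int list \<Rightarrow> real" where
  "arrival tau p = (\<Sum>i<length p - 1. tau (nat (max (p ! i) (p ! Suc i))) / 2)"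

text \<open>The reflection Green's function, a (locally finite) sum of Dirac deltas,
  represented by its coefficient function: green M tau R t is the total weight
  of the delta located at time t (terms with equal arrival times combined).\<close>
definition green :: "nat \<Rightarrow> (nat \<Rightarrow> real) \<Rightarrow> (nat \<Rightarrow> real) \<Rightarrow> real \<Rightarrow> real" where
  "green M tau R t = (\<Sum>p\<in>{p \<in> scat_seqs M. arrival tau p = t}. seq_weight R p)"

definition layer_vecs :: "nat \<Rightarrow> (nat \<Rightarrow> nat) set" where
  "layer_vecs M = {k. (\<forall>n>M. k n = 0) \<and> k 0 = 1
      \<and> (\<forall>n<M. k n = 0 \<longrightarrow> k (Suc n) = 0)}"

definition vinner :: "nat \<Rightarrow> (nat \<Rightarrow> nat) \<Rightarrow> (nat \<Rightarrow> real) \<Rightarrow> real" where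
  "vinner M k tau = (\<Sum>n\<le>M. real (k n) * tau n)"

definition shiftv :: "nat \<Rightarrow> (nat \<Rightarrow> nat) \<Rightarrow> nat \<Rightarrow> nat" where
  "shiftv M k n = (if n < M then k (Suc n) else 0)"

definition Vset :: "nat \<Rightarrow> (nat \<Rightarrow> nat) \<Rightarrow> (nat \<Rightarrow> nat) set" where
  "Vset M k = {b. (\<forall>n>M. b n = 0) \<and>
     (\<forall>n\<le>M. min 1 (shiftv M k n) \<le> b n \<and> b n \<le> min (k n) (shiftv M k n))}"

definition coef_a :: "nat \<Rightarrow> (nat \<Rightarrow> real) \<Rightarrow> (nat \<Rightarrow> nat) \<Rightarrow> real" where
  "coef_a M R k = (\<Sum>b\<in>Vset M k. \<Prod>n\<le>M.
     let kt = shiftv M k n; u = min 1 kt in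
       real (k n choose b n) * real ((kt - u) choose (b n - u))
       * (- R n) ^ (kt - b n) * R n ^ (k n - b n) * transm R n ^ (2 * b n))"

end

theory Submission
  imports Defs "HOL-Library.FuncSet"
begin

fun H :: "real \<Rightarrow> real \<Rightarrow> real \<Rightarrow> bool \<Rightarrow> nat \<Rightarrow> nat \<Rightarrow> real" where
  "H x y t fa 0 c = (if c = 0 then 1 else 0)"
| "H x y t fa (Suc a) 0 = (if fa then x else t) * H x y t True a 0"
| "H x y t fa (Suc a) (Suc c) = (if fa then t else y) * H x y t False (Suc a) c
     + (if fa then x else t) * H x y t True a (Suc c)"

definition F1 :: "real \<Rightarrow> real \<Rightarrow> real \<Rightarrow> nat \<Rightarrow> nat \<Rightarrow> real" where
  "F1 x y t a c = (if c = 0 then x ^ a else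
     (\<Sum>r<a. real (a choose Suc r) * real ((c - 1) choose r) * x ^ (a - Suc r) * y ^ (c - 1 - r) * t ^ (2 * r + 2)))"

definition F0 :: "real \<Rightarrow> real \<Rightarrow> real \<Rightarrow> nat \<Rightarrow> nat \<Rightarrow> real" where
  "F0 x y t a c = (if a = 0 then (if c = 0 then 1 else 0) else
     (\<Sum>r<a. real ((a - 1) choose r) * real (c choose r) * t ^ (2 * r + 1) * x ^ (a - 1 - r) * y ^ (c - r)))"

lemma F0_Suc_0: "F0 x y t (Suc a) 0 = t * F1 x y t a 0"
proof -
  have "F0 x y t (Suc a) 0 = (\<Sum>r<Suc a. real (a choose r) * real (0 choose r) * t ^ (2 * r + 1) * x ^ (a - r) * y ^ (0 - r))"
    by (simp add: F0_def)
  also have "\<dots> = t * x ^ a"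
    by (subst sum.lessThan_Suc_shift) (simp add: binomial_eq_0)
  finally show ?thesis by (simp add: F1_def)
qed

lemma F1_SS: "F1 x y t (Suc a) (Suc c) = t * F0 x y t (Suc a) c + x * F1 x y t a (Suc c)"
proof -
  have L: "F1 x y t (Suc a) (Suc c) = (\<Sum>r<Suc a. real (Suc a choose Suc r) * real (c choose r) * x ^ (a - r) * y ^ (c - r) * t ^ (2 * r + 2))"
    by (simp add: F1_def)
  have A: "t * F0 x y t (Suc a) c = (\<Sum>r<Suc a. real (a choose r) * real (c choose r) * x ^ (a - r) * y ^ (c - r) * t ^ (2 * r + 2))"
  proof -
    have "F0 x y t (Suc a) c = (\<Sum>r<Suc a. real (a choose r) * real (c choose r) * t ^ (2 * r + 1) * x ^ (a - r) * y ^ (c - r))"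
      by (simp add: F0_def)
    note e = this
    show ?thesis unfolding e sum_distrib_left
      by (rule sum.cong) (simp_all add: mult_ac power_add eval_nat_numeral)
  qed
  have B: "x * F1 x y t a (Suc c) = (\<Sum>r<Suc a. real (a choose Suc r) * real (c choose r) * x ^ (a - r) * y ^ (c - r) * t ^ (2 * r + 2))"
  proof -
    have e: "F1 x y t a (Suc c) = (\<Sum>r<a. real (a choose Suc r) * real (c choose r) * x ^ (a - Suc r) * y ^ (c - r) * t ^ (2 * r + 2))"
      by (simp add: F1_def)
    have "x * F1 x y t a (Suc c) = (\<Sum>r<a. real (a choose Suc r) * real (c choose r) * x ^ (a - r) * y ^ (c - r) * t ^ (2 * r + 2))"
      unfolding e sum_distrib_left
      by (rule sum.cong) (auto simp: Suc_diff_Suc power_Suc[symmetric] mult_ac simp del: power_Suc)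
    also have "\<dots> = (\<Sum>r<Suc a. real (a choose Suc r) * real (c choose r) * x ^ (a - r) * y ^ (c - r) * t ^ (2 * r + 2))"
      by simp
    finally show ?thesis .
  qed
  show ?thesis unfolding L A B sum.distrib[symmetric]
    by (rule sum.cong) (simp_all add: algebra_simps)
qed

lemma F0_SS: "F0 x y t (Suc a) (Suc c) = y * F0 x y t (Suc a) c + t * F1 x y t a (Suc c)"
proof -
  have L: "F0 x y t (Suc a) (Suc c) = real (Suc c choose 0) * y ^ Suc c * t * x ^ a
     + (\<Sum>r<a. real (a choose Suc r) * real (Suc c choose Suc r) * t ^ (2 * r + 3) * x ^ (a - Suc r) * y ^ (c - r))"
  proof -
    have "F0 x y t (Suc a) (Suc c) = (\<Sum>r<Suc a. real (a choose r) * real (Suc c choose r) * t ^ (2 * r + 1) * x ^ (a - r) * y ^ (Suc c - r))"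
      by (simp add: F0_def)
    also have "\<dots> = real (Suc c choose 0) * y ^ Suc c * t * x ^ a
     + (\<Sum>r<a. real (a choose Suc r) * real (Suc c choose Suc r) * t ^ (2 * r + 3) * x ^ (a - Suc r) * y ^ (c - r))"
    proof (subst sum.lessThan_Suc_shift, rule arg_cong2[where f="(+)"])
      show "(\<Sum>r<a. real (a choose Suc r) * real (Suc c choose Suc r) * t ^ (2 * Suc r + 1) * x ^ (a - Suc r) * y ^ (Suc c - Suc r)) = 
        (\<Sum>r<a. real (a choose Suc r) * real (Suc c choose Suc r) * t ^ (2 * r + 3) * x ^ (a - Suc r) * y ^ (c - r))"
      proof (rule sum.cong)
        fix r have "2 * Suc r + 1 = 2 * r + 3" by simp
        then show "real (a choose Suc r) * real (Suc c choose Suc r) * t ^ (2 * Suc r + 1) * x ^ (a - Suc r) * y ^ (Suc c - Suc r) = 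
          real (a choose Suc r) * real (Suc c choose Suc r) * t ^ (2 * r + 3) * x ^ (a - Suc r) * y ^ (c - r)"
          by (simp only: diff_Suc_Suc)
      qed simp
    qed simp
    finally show ?thesis .
  qed
  have A: "y * F0 x y t (Suc a) c = y ^ Suc c * t * x ^ a
     + (\<Sum>r<a. real (a choose Suc r) * real (c choose Suc r) * t ^ (2 * r + 3) * x ^ (a - Suc r) * y ^ (c - r))"
  proof -
    have "y * F0 x y t (Suc a) c = y * (y ^ c * t * x ^ a
     + (\<Sum>r<a. real (a choose Suc r) * real (c choose Suc r) * t ^ (2 * r + 3) * x ^ (a - Suc r) * y ^ (c - Suc r)))"
    proof -
      have "F0 x y t (Suc a) c = (\<Sum>r<Suc a. real (a choose r) * real (c choose r) * t ^ (2 * r + 1) * x ^ (a - r) * y ^ (c - r))"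
        by (simp add: F0_def)
      also have "\<dots> = y ^ c * t * x ^ a
     + (\<Sum>r<a. real (a choose Suc r) * real (c choose Suc r) * t ^ (2 * r + 3) * x ^ (a - Suc r) * y ^ (c - Suc r))"
        by (subst sum.lessThan_Suc_shift) (simp add: mult_ac power_add power3_eq_cube)
      finally show ?thesis by simp
    qed
    also have "\<dots> = y ^ Suc c * t * x ^ a
     + (\<Sum>r<a. real (a choose Suc r) * real (c choose Suc r) * t ^ (2 * r + 3) * x ^ (a - Suc r) * y ^ (c - r))"
      unfolding distrib_left sum_distrib_left
    proof (intro arg_cong2[where f="(+)"] sum.cong refl)
      fix r assume "r \<in> {..<a}"
      show "y * (real (a choose Suc r) * real (c choose Suc r) * t ^ (2 * r + 3) * x ^ (a - Suc r) * y ^ (c - Suc r)) =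
            real (a choose Suc r) * real (c choose Suc r) * t ^ (2 * r + 3) * x ^ (a - Suc r) * y ^ (c - r)"
      proof (cases "Suc r \<le> c")
        case True
        then have "c - r = Suc (c - Suc r)" by simp
        then show ?thesis by (simp add: mult_ac)
      next
        case False
        then show ?thesis by (simp add: binomial_eq_0)
      qed
    qed simp
    finally show ?thesis .
  qed
  have e: "F1 x y t a (Suc c) = (\<Sum>r<a. real (a choose Suc r) * real (c choose r) * x ^ (a - Suc r) * y ^ (c - r) * t ^ (2 * r + 2))"
      by (simp add: F1_def)
  have B: "t * F1 x y t a (Suc c) = (\<Sum>r<a. real (a choose Suc r) * real (c choose r) * t ^ (2 * r + 3) * x ^ (a - Suc r) * y ^ (c - r))"
    unfolding e sum_distrib_left by (rule sum.cong) (simp_all add: mult_ac power_add power3_eq_cube)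
  have P: "\<And>r. real (a choose Suc r) * real (Suc c choose Suc r) * t ^ (2 * r + 3) * x ^ (a - Suc r) * y ^ (c - r)
     = real (a choose Suc r) * real (c choose Suc r) * t ^ (2 * r + 3) * x ^ (a - Suc r) * y ^ (c - r)
      + real (a choose Suc r) * real (c choose r) * t ^ (2 * r + 3) * x ^ (a - Suc r) * y ^ (c - r)"
    by (simp add: algebra_simps)
  show ?thesis unfolding L A B P sum.distrib
    by simp
qed

lemma H_closed: "H x y t fa a c = (if fa then F1 x y t a c else F0 x y t a c)"
proof (induction x y t fa a c rule: H.induct)
  case (1 x y t fa c) then show ?case by (simp add: F1_def F0_def)
next
  case (2 x y t fa a) then show ?case by (auto simp: F0_Suc_0) (simp add: F1_def)
next
  case (3 x y t fa a c) then show ?case by (auto simp: F0_SS F1_SS)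
qed

fun valid :: "nat \<Rightarrow> int list \<Rightarrow> bool" where
  "valid M [] = False"
| "valid M [v] = (v = -1)"
| "valid M (v # w # r) = (0 \<le> v \<and> v \<le> int M \<and> \<bar>v - w\<bar> = 1 \<and> valid M (w # r))"

fun ups :: "int list \<Rightarrow> nat \<Rightarrow> nat" where
  "ups [] l = 0"
| "ups [v] l = 0"
| "ups (v # w # r) l = (if w = v - 1 \<and> v = int l then 1 else 0) + ups (w # r) l"

fun downs :: "int list \<Rightarrow> nat \<Rightarrow> nat" where
  "downs [] l = 0"
| "downs [v] l = 0"
| "downs (v # w # r) l = (if w = v + 1 \<and> w = int l then 1 else 0) + downs (w # r) l"

definition gw :: "(nat \<Rightarrow> real) \<Rightarrow> int \<Rightarrow> bool \<Rightarrow> bool \<Rightarrow> real" where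
  "gw R v fa up = (if fa \<and> up then R (nat v) else if \<not> fa \<and> \<not> up then - R (nat v) else transm R (nat v))"

fun cwt :: "(nat \<Rightarrow> real) \<Rightarrow> bool \<Rightarrow> int list \<Rightarrow> real" where
  "cwt R fa [] = 1"
| "cwt R fa [v] = 1"
| "cwt R fa (v # w # r) = gw R v fa (w = v - 1) * cwt R (w = v + 1) (w # r)"

definition Q :: "nat \<Rightarrow> int \<Rightarrow> (nat \<Rightarrow> nat) \<Rightarrow> (nat \<Rightarrow> nat) \<Rightarrow> int list set" where
  "Q M v du dd = {q. valid M q \<and> hd q = v \<and> ups q = du \<and> downs q = dd}"

lemma valid_ge: "valid M q \<Longrightarrow> x \<in> set q \<Longrightarrow> -1 \<le> x \<and> x \<le> int M"
  by (induction M q rule: valid.induct) auto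

lemma list3_cases: obtains "q = []" | x where "q = [x]" | v w r where "q = v # w # r"
  by (metis list.exhaust)

lemma Q_m1: "Q M (-1) du dd = (if du = (\<lambda>_. 0) \<and> dd = (\<lambda>_. 0) then {[-1]} else {})"
proof -
  have "q \<in> Q M (-1) du dd \<longleftrightarrow> q = [-1] \<and> du = (\<lambda>_. 0) \<and> dd = (\<lambda>_. 0)" for q
    unfolding Q_def
    by (cases q rule: list3_cases) (auto simp: fun_eq_iff)
  then show ?thesis by auto
qed

lemma ups_Cons2: "ups (v # w # r) = (\<lambda>l. (if w = v - 1 \<and> v = int l then 1 else 0) + ups (w # r) l)"
  by auto
lemma downs_Cons2: "downs (v # w # r) = (\<lambda>l. (if w = v + 1 \<and> w = int l then 1 else 0) + downs (w # r) l)"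
  by auto

lemma int_eq_aux: "0 \<le> v \<Longrightarrow> (v + 1 = int l) = (l = Suc (nat v))" "0 \<le> v \<Longrightarrow> (v = int l) = (l = nat v)"
  "0 \<le> v \<Longrightarrow> nat (v + 1) = Suc (nat v)"
  by auto

lemma Q_step:
  assumes "0 \<le> v" "v \<le> int M"
  shows "Q M v du dd =
    (if 0 < dd (Suc (nat v)) then Cons v ` Q M (v + 1) du (dd(Suc (nat v) := dd (Suc (nat v)) - 1)) else {})
  \<union> (if 0 < du (nat v) then Cons v ` Q M (v - 1) (du(nat v := du (nat v) - 1)) dd else {})"
  (is "?L = ?A \<union> ?B")
proof (intro set_eqI iffI)
  fix q assume q: "q \<in> ?L"
  then obtain w r where qe: "q = v # w # r" and vq: "valid M (w # r)" and d: "\<bar>v - w\<bar> = 1"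
    using assms unfolding Q_def
    by (cases q rule: list3_cases) auto
  from q have u: "ups q = du" and dn: "downs q = dd" unfolding Q_def by auto
  have U: "\<And>l. ups q l = du l" and D: "\<And>l. downs q l = dd l" using u dn by auto
  from d consider "w = v + 1" | "w = v - 1" by arith
  then show "q \<in> ?A \<union> ?B"
  proof cases
    case 1
    have "ups (w # r) = du"
    proof
      fix l show "ups (w # r) l = du l" using U[of l] 1 unfolding qe by (auto simp: int_eq_aux)
    qed
    moreover have "dd (Suc (nat v)) = Suc (downs (w # r) (Suc (nat v)))"
      using D[of "Suc (nat v)"] 1 assms unfolding qe by (auto simp: int_eq_aux)
    moreover have "downs (w # r) = dd(Suc (nat v) := dd (Suc (nat v)) - 1)"
    proof
      fix l show "downs (w # r) l = (dd(Suc (nat v) := dd (Suc (nat v)) - 1)) l"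
        using D[of l] 1 assms unfolding qe by (auto simp: int_eq_aux)
    qed
    ultimately show ?thesis using vq 1 qe unfolding Q_def by auto
  next
    case 2
    have "downs (w # r) = dd"
    proof
      fix l show "downs (w # r) l = dd l" using D[of l] 2 unfolding qe by (auto simp: int_eq_aux)
    qed
    moreover have "du (nat v) = Suc (ups (w # r) (nat v))"
      using U[of "nat v"] 2 assms unfolding qe by (auto simp: int_eq_aux)
    moreover have "ups (w # r) = du(nat v := du (nat v) - 1)"
    proof
      fix l show "ups (w # r) l = (du(nat v := du (nat v) - 1)) l"
        using U[of l] 2 assms unfolding qe by (auto simp: int_eq_aux)
    qed
    ultimately show ?thesis using vq 2 qe unfolding Q_def by auto
  qed
next
  fix q assume q: "q \<in> ?A \<union> ?B"
  then obtain q' where qe: "q = v # q'" and vq: "valid M q'" by (auto simp: Q_def split: if_splits)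
  then obtain w r where q'e: "q' = w # r" by (cases q') auto
  show "q \<in> ?L"
  proof (cases "q \<in> ?A")
    case True
    then have h: "0 < dd (Suc (nat v))" "w = v + 1" "ups q' = du" "downs q' = dd(Suc (nat v) := dd (Suc (nat v)) - 1)"
      using qe q'e by (auto simp: Q_def split: if_splits)
    have "ups q = du" using h unfolding qe q'e ups_Cons2 by (auto simp: fun_eq_iff)
    moreover have "downs q = dd" using h assms unfolding qe q'e downs_Cons2 by (auto simp: fun_eq_iff)
    ultimately show ?thesis using vq assms h qe q'e unfolding Q_def by auto
  next
    case False
    then have h: "0 < du (nat v)" "w = v - 1" "ups q' = du(nat v := du (nat v) - 1)" "downs q' = dd"
      using q qe q'e by (auto simp: Q_def split: if_splits)
    have "ups q = du" using h assms unfolding qe q'e ups_Cons2 by (auto simp: fun_eq_iff)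
    moreover have "downs q = dd" using h unfolding qe q'e downs_Cons2 by (auto simp: fun_eq_iff)
    ultimately show ?thesis using vq assms h qe q'e unfolding Q_def by auto
  qed
qed

definition hn :: "(nat \<Rightarrow> real) \<Rightarrow> nat \<Rightarrow> bool \<Rightarrow> nat \<Rightarrow> nat \<Rightarrow> real" where
  "hn R n fa a c = H (R n) (- R n) (transm R n) fa a c"

definition Cf :: "nat \<Rightarrow> (nat \<Rightarrow> real) \<Rightarrow> int \<Rightarrow> bool \<Rightarrow> (nat \<Rightarrow> nat) \<Rightarrow> (nat \<Rightarrow> nat) \<Rightarrow> real" where
  "Cf M R v fa du dd = (\<Prod>n\<le>M. hn R n (if int n < v then False else if int n = v then fa else True) (du n) (dd (Suc n)))"

lemma sum_dec:
  fixes f :: "nat \<Rightarrow> nat"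
  assumes "finite A" "l \<in> A" "0 < f l"
  shows "sum (f(l := f l - 1)) A < sum f A"
proof -
  have "sum (f(l := f l - 1)) A = (f l - 1) + sum (f(l := f l - 1)) (A - {l})"
    using assms by (subst sum.remove[of A l]) auto
  also have "sum (f(l := f l - 1)) (A - {l}) = sum f (A - {l})"
    by (rule sum.cong) auto
  also have "(f l - 1) + sum f (A - {l}) < f l + sum f (A - {l})" using assms by simp
  also have "\<dots> = sum f A" using assms by (subst sum.remove[of A l]) auto
  finally show ?thesis .
qed

lemma Q_empty_out: "v < -1 \<or> v > int M \<Longrightarrow> Q M v du dd = {}"
proof -
  have "False" if "valid M q" "hd q = v" "v < -1 \<or> v > int M" for q
  proof -
    have "q \<noteq> []" using that by auto
    then have "v \<in> set q" using that by (auto simp: neq_Nil_conv)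
    then show False using valid_ge[OF that(1)] that(3) by force
  qed
  then show "v < -1 \<or> v > int M \<Longrightarrow> Q M v du dd = {}" unfolding Q_def by blast
qed

lemma Q_finite:
  assumes "\<forall>l>M. du l = 0 \<and> dd l = 0"
  shows "finite (Q M v du dd)"
  using assms
proof (induction "sum du {..M} + sum dd {..M}" arbitrary: v du dd rule: less_induct)
  case less
  consider "v = -1" | "v < -1 \<or> v > int M" | "0 \<le> v \<and> v \<le> int M" by arith
  then show ?case
  proof cases
    case 1 then show ?thesis by (simp add: Q_m1)
  next
    case 2 then show ?thesis by (simp add: Q_empty_out)
  next
    case 3
    let ?l = "Suc (nat v)"
    have A: "finite (Q M (v + 1) du (dd(?l := dd ?l - 1)))" if "0 < dd ?l"
    proof -
      have "?l \<le> M" using less.prems that by (metis not_le less_irrefl)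
      then have "sum (dd(?l := dd ?l - 1)) {..M} < sum dd {..M}" using that by (intro sum_dec) auto
      then show ?thesis using less.prems by (intro less.hyps) auto
    qed
    have B: "finite (Q M (v - 1) (du(nat v := du (nat v) - 1)) dd)" if "0 < du (nat v)"
    proof -
      have "nat v \<le> M" using 3 by auto
      then have "sum (du(nat v := du (nat v) - 1)) {..M} < sum du {..M}" using that by (intro sum_dec) auto
      then show ?thesis using less.prems by (intro less.hyps) auto
    qed
    show ?thesis using 3 A B by (simp add: Q_step)
  qed
qed

lemma cwt_Cons: "valid M q \<Longrightarrow> hd q = w \<Longrightarrow> cwt R fa (v # q) = gw R v fa (w = v - 1) * cwt R (w = v + 1) q"
  by (cases q) auto

lemma hn_rec:
  assumes "0 < a"
  shows "hn R n fa a c = (if 0 < c then gw R (int n) fa False * hn R n False a (c - 1) else 0)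
     + gw R (int n) fa True * hn R n True (a - 1) c"
proof -
  obtain a' where a: "a = Suc a'" using assms by (cases a) auto
  show ?thesis
    by (cases c) (auto simp: a hn_def gw_def)
qed

lemma sum_Q_step:
  assumes "0 \<le> v" "v \<le> int M" "\<forall>l>M. du l = 0 \<and> dd l = 0"
  shows "(\<Sum>q\<in>Q M v du dd. cwt R fa q) =
    (if 0 < dd (Suc (nat v)) then gw R v fa False * (\<Sum>q\<in>Q M (v + 1) du (dd(Suc (nat v) := dd (Suc (nat v)) - 1)). cwt R True q) else 0)
  + (if 0 < du (nat v) then gw R v fa True * (\<Sum>q\<in>Q M (v - 1) (du(nat v := du (nat v) - 1)) dd. cwt R False q) else 0)"
proof -
  let ?A = "Q M (v + 1) du (dd(Suc (nat v) := dd (Suc (nat v)) - 1))"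
  let ?B = "Q M (v - 1) (du(nat v := du (nat v) - 1)) dd"
  have fA: "finite ?A" by (rule Q_finite) (use assms in auto)
  have fB: "finite ?B" by (rule Q_finite) (use assms in auto)
  have sA: "(\<Sum>q\<in>Cons v ` ?A. cwt R fa q) = gw R v fa False * (\<Sum>q\<in>?A. cwt R True q)"
  proof (subst sum.reindex)
    show "(\<Sum>q\<in>?A. (cwt R fa \<circ> Cons v) q) = gw R v fa False * (\<Sum>q\<in>?A. cwt R True q)"
      unfolding sum_distrib_left
    proof (rule sum.cong)
      fix x assume "x \<in> ?A"
      then have "valid M x" "hd x = v + 1" by (auto simp: Q_def)
      from cwt_Cons[OF this, of R fa v] show "(cwt R fa \<circ> Cons v) x = gw R v fa False * cwt R True x" by simp
    qed simp
  qed simp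
  have sB: "(\<Sum>q\<in>Cons v ` ?B. cwt R fa q) = gw R v fa True * (\<Sum>q\<in>?B. cwt R False q)"
  proof (subst sum.reindex)
    show "(\<Sum>q\<in>?B. (cwt R fa \<circ> Cons v) q) = gw R v fa True * (\<Sum>q\<in>?B. cwt R False q)"
      unfolding sum_distrib_left
    proof (rule sum.cong)
      fix x assume "x \<in> ?B"
      then have "valid M x" "hd x = v - 1" by (auto simp: Q_def)
      from cwt_Cons[OF this, of R fa v] show "(cwt R fa \<circ> Cons v) x = gw R v fa True * cwt R False x" by simp
    qed simp
  qed simp
  have disj: "Cons v ` ?A \<inter> Cons v ` ?B = {}" by (auto simp: Q_def)
  show ?thesis
    unfolding Q_step[OF assms(1,2)]
    using fA fB disj sA sB by (simp add: sum.union_disjoint)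
qed

lemma Cf_step:
  assumes v: "0 \<le> v" "v \<le> int M" and du: "0 < du (nat v)"
  shows "Cf M R v fa du dd =
    (if 0 < dd (Suc (nat v)) then gw R v fa False * Cf M R (v + 1) True du (dd(Suc (nat v) := dd (Suc (nat v)) - 1)) else 0)
  + gw R v fa True * Cf M R (v - 1) False (du(nat v := du (nat v) - 1)) dd"
proof -
  define st where "st = (\<lambda>n::nat. if int n < v then False else True)"
  define P where "P = (\<Prod>n\<in>{..M} - {nat v}. hn R n (st n) (du n) (dd (Suc n)))"
  have mem: "nat v \<in> {..M}" using v by auto
  have nv: "int (nat v) = v" using v by simp
  have ne: "\<And>n. n \<in> {..M} - {nat v} \<Longrightarrow> int n \<noteq> v" using nv by auto
  have e1: "Cf M R v fa du dd = hn R (nat v) fa (du (nat v)) (dd (Suc (nat v))) * P"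
  proof -
    have "Cf M R v fa du dd = hn R (nat v) (if int (nat v) < v then False else if int (nat v) = v then fa else True) (du (nat v)) (dd (Suc (nat v)))
       * (\<Prod>n\<in>{..M} - {nat v}. hn R n (if int n < v then False else if int n = v then fa else True) (du n) (dd (Suc n)))"
      unfolding Cf_def by (rule prod.remove[OF _ mem]) simp
    also have "(\<Prod>n\<in>{..M} - {nat v}. hn R n (if int n < v then False else if int n = v then fa else True) (du n) (dd (Suc n))) = P"
      unfolding P_def st_def by (rule prod.cong) (use ne in auto)
    finally show ?thesis using nv by simp
  qed
  have e2: "Cf M R (v + 1) True du (dd(Suc (nat v) := dd (Suc (nat v)) - 1))
      = hn R (nat v) False (du (nat v)) (dd (Suc (nat v)) - 1) * P"
  proof -
    let ?dd = "dd(Suc (nat v) := dd (Suc (nat v)) - 1)"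
    have "Cf M R (v + 1) True du ?dd = hn R (nat v) (if int (nat v) < v + 1 then False else if int (nat v) = v + 1 then True else True) (du (nat v)) (?dd (Suc (nat v)))
       * (\<Prod>n\<in>{..M} - {nat v}. hn R n (if int n < v + 1 then False else if int n = v + 1 then True else True) (du n) (?dd (Suc n)))"
      unfolding Cf_def by (rule prod.remove[OF _ mem]) simp
    also have "(\<Prod>n\<in>{..M} - {nat v}. hn R n (if int n < v + 1 then False else if int n = v + 1 then True else True) (du n) (?dd (Suc n))) = P"
      unfolding P_def st_def
    proof (rule prod.cong)
      fix n assume n: "n \<in> {..M} - {nat v}"
      then have "int n \<noteq> v" "n \<noteq> nat v" using ne by auto
      then show "hn R n (if int n < v + 1 then False else if int n = v + 1 then True else True) (du n) (?dd (Suc n)) =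
         hn R n (if int n < v then False else True) (du n) (dd (Suc n))"
        by (smt (verit, ccfv_threshold) fun_upd_other nat_int old.nat.inject)
    qed simp
    also have "hn R (nat v) (if int (nat v) < v + 1 then False else if int (nat v) = v + 1 then True else True) (du (nat v)) (?dd (Suc (nat v)))
       = hn R (nat v) False (du (nat v)) (dd (Suc (nat v)) - 1)" using nv by simp
    finally show ?thesis .
  qed
  have e3: "Cf M R (v - 1) False (du(nat v := du (nat v) - 1)) dd
      = hn R (nat v) True (du (nat v) - 1) (dd (Suc (nat v))) * P"
  proof -
    let ?du = "du(nat v := du (nat v) - 1)"
    have "Cf M R (v - 1) False ?du dd = hn R (nat v) (if int (nat v) < v - 1 then False else if int (nat v) = v - 1 then False else True) (?du (nat v)) (dd (Suc (nat v)))
       * (\<Prod>n\<in>{..M} - {nat v}. hn R n (if int n < v - 1 then False else if int n = v - 1 then False else True) (?du n) (dd (Suc n)))"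
      unfolding Cf_def by (rule prod.remove[OF _ mem]) simp
    also have "(\<Prod>n\<in>{..M} - {nat v}. hn R n (if int n < v - 1 then False else if int n = v - 1 then False else True) (?du n) (dd (Suc n))) = P"
      unfolding P_def st_def
    proof (rule prod.cong)
      fix n assume n: "n \<in> {..M} - {nat v}"
      then have "int n \<noteq> v" "n \<noteq> nat v" using ne by auto
      then show "hn R n (if int n < v - 1 then False else if int n = v - 1 then False else True) (?du n) (dd (Suc n)) =
         hn R n (if int n < v then False else True) (du n) (dd (Suc n))"
        by (smt (verit, ccfv_threshold) fun_upd_other)
    qed simp
    also have "hn R (nat v) (if int (nat v) < v - 1 then False else if int (nat v) = v - 1 then False else True) (?du (nat v)) (dd (Suc (nat v)))
      = hn R (nat v) True (du (nat v) - 1) (dd (Suc (nat v)))" using nv by simp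
    finally show ?thesis .
  qed
  show ?thesis unfolding e1 e2 e3 hn_rec[OF du, where R=R and n="nat v" and fa=fa and c="dd (Suc (nat v))"] nv
    by (simp add: algebra_simps)
qed

lemma H_0_0: "H x y t fa 0 0 = 1" by simp

lemma Cf_m1:
  assumes supp: "\<forall>l>M. du l = 0 \<and> dd l = 0" and d0: "dd 0 = 0"
    and flow: "\<forall>l. du l = dd l"
  shows "Cf M R (-1) fa du dd = (if du = (\<lambda>_. 0) \<and> dd = (\<lambda>_. 0) then 1 else 0)"
proof (cases "dd = (\<lambda>_. 0)")
  case True
  then have "du = (\<lambda>_. 0)" using flow by auto
  then show ?thesis using True by (simp add: Cf_def hn_def)
next
  case False
  then obtain l where l: "dd l > 0" by (auto simp: fun_eq_iff)
  define l0 where "l0 = (LEAST l. dd l > 0)"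
  have l0: "dd l0 > 0" using l unfolding l0_def by (rule LeastI)
  have l0min: "\<And>j. j < l0 \<Longrightarrow> dd j = 0" unfolding l0_def using not_less_Least by blast
  have "l0 \<noteq> 0" using l0 d0 by (metis less_irrefl)
  then obtain n where n: "l0 = Suc n" by (cases l0) auto
  have "l0 \<le> M" using supp l0 by (metis not_le less_irrefl)
  then have nM: "n \<in> {..M}" using n by auto
  have "du n = 0" using flow l0min[of n] n by auto
  then have "hn R n (if int n < -1 then False else if int n = -1 then fa else True) (du n) (dd (Suc n)) = 0"
    using l0 n by (simp add: hn_def)
  then have "Cf M R (-1) fa du dd = 0" unfolding Cf_def using nM by (intro prod_zero) auto
  then show ?thesis using False by simp
qed

lemma main_lemma:
  assumes "\<forall>l>M. du l = 0 \<and> dd l = 0" "dd 0 = 0" "-1 \<le> v" "v \<le> int M"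
    "\<forall>l. du l = dd l + (if int l \<le> v then 1 else 0)"
  shows "(\<Sum>q\<in>Q M v du dd. cwt R fa q) = Cf M R v fa du dd"
  using assms
proof (induction "sum du {..M} + sum dd {..M}" arbitrary: v fa du dd rule: less_induct)
  case less
  show ?case
  proof (cases "v = -1")
    case True
    have fl: "\<forall>l. du l = dd l" using less.prems(5) True by auto
    show ?thesis using True Cf_m1[OF less.prems(1,2) fl] by (simp add: Q_m1)
  next
    case False
    then have v0: "0 \<le> v" using less.prems(3) by auto
    let ?l = "Suc (nat v)"
    have duv: "0 < du (nat v)" using less.prems(5) v0 by (auto dest: spec[of _ "nat v"])
    have A: "(\<Sum>q\<in>Q M (v + 1) du (dd(?l := dd ?l - 1)). cwt R True q) = Cf M R (v + 1) True du (dd(?l := dd ?l - 1))"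
      if "0 < dd ?l"
    proof -
      have lM: "?l \<le> M" using less.prems that by (metis not_le less_irrefl)
      then have "sum (dd(?l := dd ?l - 1)) {..M} < sum dd {..M}" using that by (intro sum_dec) auto
      moreover have "\<forall>l. du l = (dd(?l := dd ?l - 1)) l + (if int l \<le> v + 1 then 1 else 0)"
      proof
        fix l
        show "du l = (dd(?l := dd ?l - 1)) l + (if int l \<le> v + 1 then 1 else 0)"
          using less.prems(5) v0 that by (cases "l = ?l") (auto dest: spec[of _ l])
      qed
      ultimately show ?thesis using less.prems lM v0 by (intro less.hyps) auto
    qed
    have B: "(\<Sum>q\<in>Q M (v - 1) (du(nat v := du (nat v) - 1)) dd. cwt R False q) = Cf M R (v - 1) False (du(nat v := du (nat v) - 1)) dd"
    proof -
      have "nat v \<le> M" using less.prems by auto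
      then have "sum (du(nat v := du (nat v) - 1)) {..M} < sum du {..M}" using duv by (intro sum_dec) auto
      moreover have "\<forall>l. (du(nat v := du (nat v) - 1)) l = dd l + (if int l \<le> v - 1 then 1 else 0)"
      proof
        fix l
        show "(du(nat v := du (nat v) - 1)) l = dd l + (if int l \<le> v - 1 then 1 else 0)"
          using less.prems(5) v0 by (cases "l = nat v") (auto dest: spec[of _ l])
      qed
      ultimately show ?thesis using less.prems v0 by (intro less.hyps) auto
    qed
    show ?thesis
      unfolding sum_Q_step[OF v0 less.prems(4,1)] Cf_step[where du=du and M=M, OF v0 less.prems(4) duv]
      using A B duv by simp
  qed
qed

lemma valid_nth: "valid M q \<longleftrightarrow> q \<noteq> [] \<and> last q = -1 \<and>
   (\<forall>i. i < length q - 1 \<longrightarrow> 0 \<le> q ! i \<and> q ! i \<le> int M \<and> \<bar>q ! i - q ! Suc i\<bar> = 1)"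
proof (induction M q rule: valid.induct)
  case (3 M v w r)
  define C where "C = (\<lambda>(q::int list) i. 0 \<le> q ! i \<and> q ! i \<le> int M \<and> \<bar>q ! i - q ! Suc i\<bar> = 1)"
  have "(\<forall>i. i < length (v # w # r) - 1 \<longrightarrow> C (v # w # r) i)
     = (C (v # w # r) 0 \<and> (\<forall>i. i < length (w # r) - 1 \<longrightarrow> C (v # w # r) (Suc i)))"
    using All_less_Suc2[of "length (w # r) - 1" "C (v # w # r)"] by simp
  moreover have "C (v # w # r) (Suc i) = C (w # r) i" for i unfolding C_def by simp
  moreover have "C (v # w # r) 0 = (0 \<le> v \<and> v \<le> int M \<and> \<bar>v - w\<bar> = 1)" unfolding C_def by simp
  ultimately show ?case using 3 unfolding C_def by (simp only: valid.simps) auto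
qed auto

lemma scat_iff: "p \<in> scat_seqs M \<longleftrightarrow> (\<exists>q. p = -1 # q \<and> valid M q \<and> hd q = 0)"
proof
  assume p: "p \<in> scat_seqs M"
  then have len: "length p \<ge> 3" and p0: "p ! 0 = -1" and pl: "p ! (length p - 1) = -1"
    and int: "\<forall>i. 0 < i \<and> i < length p - 1 \<longrightarrow> 0 \<le> p ! i \<and> p ! i \<le> int M"
    and st: "\<forall>i. i < length p - 1 \<longrightarrow> \<bar>p ! i - p ! Suc i\<bar> = 1"
    unfolding scat_seqs_def by auto
  obtain x q where pe: "p = x # q" using len by (cases p) auto
  have x: "x = -1" using p0 pe by simp
  have lq: "length q \<ge> 2" using len pe by simp
  have vq: "valid M q"
    unfolding valid_nth
  proof (intro conjI allI impI)
    show "q \<noteq> []" using lq by auto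
    have "(x # q) ! length q = q ! (length q - 1)" using lq by (cases "length q") auto
    moreover have "q \<noteq> []" using lq by auto
    ultimately show "last q = -1" using pl pe by (simp add: last_conv_nth)
    fix i assume i: "i < length q - 1"
    have "0 < Suc i \<and> Suc i < length p - 1" using i pe by auto
    then have "0 \<le> p ! Suc i \<and> p ! Suc i \<le> int M" using int by blast
    then show "0 \<le> q ! i" "q ! i \<le> int M" using pe by auto
    have "Suc i < length p - 1" using i pe by auto
    then have "\<bar>p ! Suc i - p ! Suc (Suc i)\<bar> = 1" using st by blast
    then show "\<bar>q ! i - q ! Suc i\<bar> = 1" using pe by simp
  qed
  have "0 \<le> p ! 1" using int len by auto
  moreover have "\<bar>p ! 0 - p ! 1\<bar> = 1" using st len by (auto dest: spec[of _ 0])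
  ultimately have "p ! 1 = 0" using p0 by auto
  moreover have "q \<noteq> []" using lq by auto
  ultimately have "hd q = 0" using pe by (simp add: hd_conv_nth)
  then show "\<exists>q. p = -1 # q \<and> valid M q \<and> hd q = 0" using pe x vq by auto
next
  assume "\<exists>q. p = -1 # q \<and> valid M q \<and> hd q = 0"
  then obtain q where pe: "p = -1 # q" and vq: "valid M q" and hq: "hd q = 0" by auto
  from vq have qne: "q \<noteq> []" and ql: "last q = -1"
    and qi: "\<And>i. i < length q - 1 \<Longrightarrow> 0 \<le> q ! i \<and> q ! i \<le> int M \<and> \<bar>q ! i - q ! Suc i\<bar> = 1"
    unfolding valid_nth by auto
  have lq: "length q \<ge> 2"
  proof (rule ccontr)
    assume a: "\<not> 2 \<le> length q"
    have "0 < length q" using qne by simp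
    then have "length q = 1" using a by linarith
    then have "q = [hd q]" by (cases q) auto
    then show False using hq ql by (metis last_ConsL zero_neq_neg_one)
  qed
  show "p \<in> scat_seqs M"
    unfolding scat_seqs_def
  proof (intro CollectI conjI allI impI)
    show "3 \<le> length p" using lq pe by simp
    show "p ! 0 = -1" using pe by simp
    show "p ! (length p - 1) = -1" using pe ql qne by (simp add: last_conv_nth)
    fix i assume i: "0 < i \<and> i < length p - 1"
    then obtain j where j: "i = Suc j" by (cases i) auto
    show "0 \<le> p ! i" "p ! i \<le> int M" using qi[of j] i j pe by auto
  next
    fix i assume i: "i < length p - 1"
    show "\<bar>p ! i - p ! Suc i\<bar> = 1"
    proof (cases i)
      case 0 then show ?thesis using pe hq qne by (simp add: hd_conv_nth)
    next
      case (Suc j) then show ?thesis using qi[of j] i pe by auto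
    qed
  qed
qed

lemma flow: "valid M q \<Longrightarrow> ups q l = downs q l + (if int l \<le> hd q then 1 else 0)"
  by (induction M q rule: valid.induct) (auto split: if_splits)

lemma supp: "valid M q \<Longrightarrow> M < l \<Longrightarrow> ups q l = 0 \<and> downs q l = 0"
proof (induction M q rule: valid.induct)
  case (3 M v w r)
  then have "w \<noteq> int l" using valid_ge[of M "w # r" w] by auto
  then show ?case using 3 by auto
qed auto

lemma downs0: "valid M q \<Longrightarrow> downs q 0 = 0"
  by (induction M q rule: valid.induct) auto

lemma pos_ups: "valid M q \<Longrightarrow> int x \<le> hd q \<Longrightarrow> 0 < ups q x"
proof (induction M q arbitrary: x rule: valid.induct)
  case (3 M v w r)
  show ?case
  proof (cases "w = v - 1 \<and> v = int x")
    case True then show ?thesis by simp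
  next
    case False
    then have "int x \<le> w" using 3 by auto
    then show ?thesis using 3 by auto
  qed
qed auto

lemma mono_ups: "valid M q \<Longrightarrow> 0 < ups q (Suc n) \<Longrightarrow> 0 < ups q n"
proof (induction M q rule: valid.induct)
  case (3 M v w r)
  show ?case
  proof (cases "w = v - 1 \<and> v = int (Suc n)")
    case True
    then have "0 < ups (w # r) n" using 3 by (intro pos_ups[of M]) auto
    then show ?thesis by simp
  next
    case False
    then show ?thesis using 3 by auto
  qed
qed auto

lemma lw_shift: "0 < i \<Longrightarrow> local_weight R (u # q) (Suc i) = local_weight R q i"
  by (cases i) (simp_all add: local_weight_def Let_def)

lemma prod_lw:
  "valid M q \<Longrightarrow> hd q = v \<Longrightarrow> \<bar>u - v\<bar> = 1 \<Longrightarrow>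
   (\<Prod>i\<in>{1..<length (u # q) - 1}. local_weight R (u # q) i) = cwt R (u = v - 1) q"
proof (induction M q arbitrary: u v rule: valid.induct)
  case (2 M x) then show ?case by simp
next
  case (3 M x w r)
  have xv: "x = v" using 3 by simp
  have "(\<Prod>i\<in>{1..<length (u # x # w # r) - 1}. local_weight R (u # x # w # r) i)
      = local_weight R (u # x # w # r) 1 * (\<Prod>i\<in>{Suc 1..<Suc (length (x # w # r) - 1)}. local_weight R (u # x # w # r) i)"
    by (subst prod.atLeast_Suc_lessThan) auto
  also have "(\<Prod>i\<in>{Suc 1..<Suc (length (x # w # r) - 1)}. local_weight R (u # x # w # r) i)
      = (\<Prod>i\<in>{1..<length (x # w # r) - 1}. local_weight R (x # w # r) i)"
    by (subst prod.shift_bounds_Suc_ivl) (rule prod.cong, auto simp: lw_shift)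
  also have "\<dots> = cwt R (x = w - 1) (w # r)"
    using 3 by (intro "3.IH") auto
  also have "local_weight R (u # x # w # r) 1 = gw R x (u = x - 1) (w = x - 1)"
    using 3 xv unfolding local_weight_def gw_def by (auto simp: Let_def)
  finally have P: "(\<Prod>i\<in>{1..<length (u # x # w # r) - 1}. local_weight R (u # x # w # r) i)
     = gw R x (u = x - 1) (w = x - 1) * cwt R (x = w - 1) (w # r)" .
  have e: "(x = w - 1) = (w = x + 1)" by auto
  show ?case unfolding xv[symmetric] cwt.simps(3) P e by (rule refl)
qed simp

lemma seq_weight_eq: "valid M q \<Longrightarrow> hd q = 0 \<Longrightarrow> seq_weight R (-1 # q) = cwt R True q"
  unfolding seq_weight_def using prod_lw[of M q 0 "-1" R] by simp

lemma sum_nth_rec: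
  "(\<Sum>i<length (v # w # r) - 1. f ((v # w # r) ! i) ((v # w # r) ! Suc i))
   = f v w + (\<Sum>i<length (w # r) - 1. f ((w # r) ! i) ((w # r) ! Suc i))"
proof -
  have "length (v # w # r) - 1 = Suc (length (w # r) - 1)" by simp
  then show ?thesis by (simp only: sum.lessThan_Suc_shift) simp
qed

lemma arr_valid:
  "valid M q \<Longrightarrow> (\<Sum>i<length q - 1. tau (nat (max (q ! i) (q ! Suc i))) / 2)
     = (\<Sum>l\<le>M. real (ups q l + downs q l) * tau l / 2)"
proof (induction M q rule: valid.induct)
  case (3 M v w r)
  define m where "m = nat (max v w)"
  have wM: "w \<le> int M" if "w = v + 1" using valid_ge[of M "w # r" w] 3 that by auto
  have mM: "m \<le> M" using 3 wM unfolding m_def by (cases "w = v + 1") (auto simp: nat_le_iff max_def)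
  have ind: "real ((if w = v - 1 \<and> v = int l then 1 else 0) + (if w = v + 1 \<and> w = int l then 1 else 0))
     = (if l = m then 1 else 0)" for l
    using 3 unfolding m_def by auto
  have "(\<Sum>l\<le>M. real (ups (v # w # r) l + downs (v # w # r) l) * tau l / 2)
     = (\<Sum>l\<le>M. (if l = m then tau l / 2 else 0)) + (\<Sum>l\<le>M. real (ups (w # r) l + downs (w # r) l) * tau l / 2)"
    unfolding sum.distrib[symmetric]
  proof (rule sum.cong)
    fix l
    show "real (ups (v # w # r) l + downs (v # w # r) l) * tau l / 2 =
       (if l = m then tau l / 2 else 0) + real (ups (w # r) l + downs (w # r) l) * tau l / 2"
      using ind[of l] by (simp add: algebra_simps split: if_splits)
  qed simp
  also have "(\<Sum>l\<le>M. (if l = m then tau l / 2 else 0)) = tau m / 2" using mM by simp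
  finally have X: "(\<Sum>l\<le>M. real (ups (v # w # r) l + downs (v # w # r) l) * tau l / 2) = tau m / 2 + (\<Sum>l\<le>M. real (ups (w # r) l + downs (w # r) l) * tau l / 2)" .
  have vw: "valid M (w # r)" using 3 by simp
  show ?case using sum_nth_rec[of "\<lambda>a b. tau (nat (max a b)) / 2" v w r] "3.IH"[OF vw] X by (simp add: m_def)
qed simp_all

lemma arrival_eq:
  assumes "valid M q" "hd q = 0" "ups q = k" "downs q = k(0 := 0)" "k 0 = 1"
  shows "arrival tau (-1 # q) = vinner M k tau"
proof -
  obtain w r where q: "q = w # r" using assms by (cases q) auto
  have "arrival tau (-1 # w # r) = tau (nat (max (-1) w)) / 2 + (\<Sum>i<length (w # r) - 1. tau (nat (max ((w # r) ! i) ((w # r) ! Suc i))) / 2)"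
    unfolding arrival_def by (rule sum_nth_rec)
  then have "arrival tau (-1 # q) = tau 0 / 2 + (\<Sum>l\<le>M. real (ups q l + downs q l) * tau l / 2)"
    using assms q arr_valid[OF assms(1), of tau] by simp
  also have "(\<Sum>l\<le>M. real (ups q l + downs q l) * tau l / 2)
      = (\<Sum>l\<le>M. real (k l) * tau l - (if l = 0 then tau 0 / 2 else 0))"
    using assms by (intro sum.cong) (auto simp: field_simps)
  also have "\<dots> = vinner M k tau - tau 0 / 2"
    unfolding sum_subtractf vinner_def by simp
  finally show ?thesis by simp
qed

lemma F1_range:
  "F1 x y t a c = (\<Sum>j\<in>{min 1 c..min a c}. real (a choose j) * real ((c - min 1 c) choose (j - min 1 c))
       * y ^ (c - j) * x ^ (a - j) * t ^ (2 * j))"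
proof (cases c)
  case 0 then show ?thesis by (simp add: F1_def)
next
  case (Suc c')
  define g where "g j = real (a choose j) * real (c' choose (j - 1)) * y ^ (Suc c' - j) * x ^ (a - j) * t ^ (2 * j)" for j
  have "F1 x y t a c = (\<Sum>r<a. g (Suc r))"
    unfolding F1_def Suc g_def by (simp add: mult_ac)
  also have "\<dots> = (\<Sum>r\<in>{0..<a}. g (Suc r))" by (simp add: atLeast0LessThan)
  also have "\<dots> = (\<Sum>j\<in>{Suc 0..<Suc a}. g j)" by (rule sum.shift_bounds_Suc_ivl[symmetric])
  also have "\<dots> = (\<Sum>j\<in>{1..min a c}. g j)"
  proof (rule sum.mono_neutral_right)
    show "{1..min a c} \<subseteq> {Suc 0..<Suc a}" by auto
    show "\<forall>j\<in>{Suc 0..<Suc a} - {1..min a c}. g j = 0"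
      using Suc by (auto simp: g_def binomial_eq_0)
  qed simp
  finally show ?thesis unfolding g_def Suc by simp
qed

lemma coef_a_eq:
  assumes k: "k \<in> layer_vecs M"
  shows "coef_a M R k = Cf M R 0 True k (k(0 := 0))"
proof -
  have kM: "k (Suc M) = 0" using k unfolding layer_vecs_def by auto
  have sh: "n \<le> M \<Longrightarrow> shiftv M k n = k (Suc n)" for n using kM unfolding shiftv_def by auto
  define lo where "lo n = min 1 (shiftv M k n)" for n
  define hi where "hi n = min (k n) (shiftv M k n)" for n
  define f where "f n j = (let kt = shiftv M k n; u = min 1 kt in
       real (k n choose j) * real ((kt - u) choose (j - u))
       * (- R n) ^ (kt - j) * R n ^ (k n - j) * transm R n ^ (2 * j))" for n j
  have V: "Vset M k = {b. (\<forall>n>M. b n = 0) \<and> (\<forall>n\<le>M. b n \<in> {lo n..hi n})}"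
    unfolding Vset_def lo_def hi_def by auto
  have "coef_a M R k = (\<Sum>b\<in>Vset M k. \<Prod>n\<le>M. f n (b n))"
    unfolding coef_a_def f_def by simp
  also have "\<dots> = (\<Sum>g\<in>PiE {..M} (\<lambda>n. {lo n..hi n}). \<Prod>n\<le>M. f n (g n))"
    unfolding V
    by (rule sum.reindex_bij_witness[of _ "\<lambda>g n. if n \<le> M then g n else 0" "\<lambda>b. restrict b {..M}"])
       (auto simp: PiE_def extensional_def fun_eq_iff intro!: prod.cong)
  also have "\<dots> = (\<Prod>n\<le>M. \<Sum>j\<in>{lo n..hi n}. f n j)"
    by (rule prod_sum_PiE[symmetric]) auto
  also have "\<dots> = (\<Prod>n\<le>M. hn R n True (k n) (k (Suc n)))"
  proof (rule prod.cong)
    fix n assume n: "n \<in> {..M}"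
    show "(\<Sum>j\<in>{lo n..hi n}. f n j) = hn R n True (k n) (k (Suc n))"
      unfolding hn_def H_closed F1_range lo_def hi_def f_def sh[of n] using n sh[of n]
      by (simp add: Let_def mult_ac)
  qed simp
  also have "\<dots> = Cf M R 0 True k (k(0 := 0))"
    unfolding Cf_def by simp
  finally show ?thesis .
qed

lemma finite_bounded_funs:
  "finite {k::nat \<Rightarrow> nat. (\<forall>n>M. k n = 0) \<and> (\<forall>n\<le>M. k n \<le> B)}"
proof -
  have "{k::nat \<Rightarrow> nat. (\<forall>n>M. k n = 0) \<and> (\<forall>n\<le>M. k n \<le> B)}
     \<subseteq> (\<lambda>g n. if n \<le> M then g n else 0) ` PiE {..M} (\<lambda>_. {..B})"
  proof
    fix k assume k: "k \<in> {k::nat \<Rightarrow> nat. (\<forall>n>M. k n = 0) \<and> (\<forall>n\<le>M. k n \<le> B)}"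
    show "k \<in> (\<lambda>g n. if n \<le> M then g n else 0) ` PiE {..M} (\<lambda>_. {..B})"
    proof (rule image_eqI[of _ _ "restrict k {..M}"])
      show "k = (\<lambda>n. if n \<le> M then restrict k {..M} n else 0)" using k by (auto simp: fun_eq_iff)
      show "restrict k {..M} \<in> PiE {..M} (\<lambda>_. {..B})" using k by auto
    qed
  qed
  moreover have "finite (PiE {..M} (\<lambda>_. {..B::nat}))" by (rule finite_PiE) auto
  ultimately show ?thesis using finite_subset by blast
qed

lemma finite_K:
  assumes tau: "\<forall>n\<le>M. tau n > 0"
  shows "finite {k \<in> layer_vecs M. vinner M k tau = t}"
proof -
  define m where "m = Min (tau ` {..M})"
  have m0: "m > 0" unfolding m_def using tau by (subst Min_gr_iff) auto
  have mle: "n \<le> M \<Longrightarrow> m \<le> tau n" for n unfolding m_def by (intro Min_le) auto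
  define B where "B = nat \<lceil>t / m\<rceil>"
  have "{k \<in> layer_vecs M. vinner M k tau = t} \<subseteq> {k. (\<forall>n>M. k n = 0) \<and> (\<forall>n\<le>M. k n \<le> B)}"
  proof (intro subsetI CollectI conjI allI impI)
    fix k n assume kk: "k \<in> {k \<in> layer_vecs M. vinner M k tau = t}" and n: "n \<le> M"
    then have k: "k \<in> layer_vecs M" and t: "vinner M k tau = t" by auto
    have "real (k n) * tau n \<le> (\<Sum>n\<le>M. real (k n) * tau n)"
      using n tau by (intro member_le_sum) (auto intro: mult_nonneg_nonneg less_imp_le)
    then have "real (k n) * tau n \<le> t" using t unfolding vinner_def by simp
    moreover have "real (k n) * m \<le> real (k n) * tau n" using mle[OF n] by (simp add: mult_left_mono)
    ultimately have "real (k n) * m \<le> t" by linarith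
    then have "real (k n) \<le> t / m" using m0 by (simp add: field_simps)
    then have "real (k n) \<le> real B" unfolding B_def by linarith
    then show "k n \<le> B" by simp
  next
    fix k n assume "k \<in> {k \<in> layer_vecs M. vinner M k tau = t}" "M < n"
    then show "k n = 0" unfolding layer_vecs_def by auto
  qed
  then show ?thesis using finite_bounded_funs finite_subset by blast
qed

theorem theorem1:
  fixes M :: nat and tau R :: "nat \<Rightarrow> real"
  assumes "M \<ge> 1"
    and "\<forall>n\<le>M. tau n > 0"
    and "\<forall>n\<le>M. -1 < R n \<and> R n < 1"
  shows "green M tau R =
    (\<lambda>t. \<Sum>k\<in>{k \<in> layer_vecs M. vinner M k tau = t}. coef_a M R k)"
proof
  fix t
  define K where "K = {k \<in> layer_vecs M. vinner M k tau = t}"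
  have fK: "finite K" unfolding K_def using assms(2) by (rule finite_K)
  have lv: "k \<in> layer_vecs M \<Longrightarrow> (\<forall>l>M. k l = 0 \<and> (k(0 := 0)) l = 0) \<and> (k(0 := 0)) 0 = 0 \<and> k 0 = 1
      \<and> (\<forall>l. k l = (k(0 := 0)) l + (if int l \<le> 0 then 1 else 0))" for k
    unfolding layer_vecs_def by auto
  have fQ: "k \<in> K \<Longrightarrow> finite (Q M 0 k (k(0 := 0)))" for k
    using lv[of k] unfolding K_def by (intro Q_finite) auto
  have S: "{p \<in> scat_seqs M. arrival tau p = t} = Cons (-1) ` (\<Union>k\<in>K. Q M 0 k (k(0 := 0)))"
  proof (intro set_eqI iffI)
    fix p assume "p \<in> {p \<in> scat_seqs M. arrival tau p = t}"
    then obtain q where pe: "p = -1 # q" and vq: "valid M q" and hq: "hd q = 0" and at: "arrival tau p = t"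
      using scat_iff by blast
    define k where "k = ups q"
    have d0: "downs q 0 = 0" using downs0[OF vq] .
    have fl: "\<And>l. ups q l = downs q l + (if int l \<le> 0 then 1 else 0)" using flow[OF vq] hq by simp
    have k0: "k 0 = 1" using fl[of 0] d0 unfolding k_def by simp
    have dk: "downs q = k(0 := 0)"
    proof
      fix l show "downs q l = (k(0 := 0)) l" using fl[of l] d0 unfolding k_def by (cases l) auto
    qed
    have kL: "k \<in> layer_vecs M"
      unfolding layer_vecs_def
    proof (intro CollectI conjI allI impI)
      fix n assume "M < n" then show "k n = 0" using supp[OF vq] unfolding k_def by auto
    next
      show "k 0 = 1" by (rule k0)
    next
      fix n assume "n < M" "k n = 0"
      then show "k (Suc n) = 0" using mono_ups[OF vq, of n] unfolding k_def by auto
    qed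
    have "vinner M k tau = t" using arrival_eq[OF vq hq _ dk k0] at pe k_def by simp
    then have "k \<in> K" using kL unfolding K_def by simp
    moreover have "q \<in> Q M 0 k (k(0 := 0))" unfolding Q_def using vq hq dk k_def by simp
    ultimately show "p \<in> Cons (-1) ` (\<Union>k\<in>K. Q M 0 k (k(0 := 0)))" using pe by auto
  next
    fix p assume "p \<in> Cons (-1) ` (\<Union>k\<in>K. Q M 0 k (k(0 := 0)))"
    then obtain k q where kK: "k \<in> K" and qQ: "q \<in> Q M 0 k (k(0 := 0))" and pe: "p = -1 # q" by auto
    from qQ have vq: "valid M q" and hq: "hd q = 0" and u: "ups q = k" and d: "downs q = k(0 := 0)"
      unfolding Q_def by auto
    have "k 0 = 1" using kK unfolding K_def layer_vecs_def by auto
    then have "arrival tau p = vinner M k tau" using arrival_eq[OF vq hq u d] pe by simp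
    then have "arrival tau p = t" using kK unfolding K_def by simp
    moreover have "p \<in> scat_seqs M" using scat_iff vq hq pe by blast
    ultimately show "p \<in> {p \<in> scat_seqs M. arrival tau p = t}" by simp
  qed
  have "green M tau R t = (\<Sum>p\<in>Cons (-1) ` (\<Union>k\<in>K. Q M 0 k (k(0 := 0))). seq_weight R p)"
    unfolding green_def S ..
  also have "\<dots> = (\<Sum>q\<in>(\<Union>k\<in>K. Q M 0 k (k(0 := 0))). seq_weight R (-1 # q))"
    by (subst sum.reindex) auto
  also have "\<dots> = (\<Sum>q\<in>(\<Union>k\<in>K. Q M 0 k (k(0 := 0))). cwt R True q)"
    by (rule sum.cong) (auto simp: Q_def intro: seq_weight_eq)
  also have "\<dots> = (\<Sum>k\<in>K. \<Sum>q\<in>Q M 0 k (k(0 := 0)). cwt R True q)"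
    by (rule sum.UNION_disjoint) (use fK fQ in \<open>auto simp: Q_def\<close>)
  also have "\<dots> = (\<Sum>k\<in>K. coef_a M R k)"
  proof (rule sum.cong)
    fix k assume kK: "k \<in> K"
    then have kL: "k \<in> layer_vecs M" unfolding K_def by simp
    show "(\<Sum>q\<in>Q M 0 k (k(0 := 0)). cwt R True q) = coef_a M R k"
      unfolding coef_a_eq[OF kL] using lv[OF kL] by (intro main_lemma) auto
  qed simp
  finally show "green M tau R t = (\<Sum>k\<in>{k \<in> layer_vecs M. vinner M k tau = t}. coef_a M R k)"
    unfolding K_def .
qed

end
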